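(* For every $N\ge2$ and all masses $m_1,\dots,m_N>0$, $$C(\mathbf m)\ \ge\ C_L(\mathbf m):=\gamma\Big(\sum_{i<j}m_im_j\Big)^{3/2}\Big(\sum_i m_i\Big)^{-1/2}.$$
   Context: Fix $\gamma>0$. Planar configuration space $\mathfrak R=\{\mathbf r=(\mathbf r_1,\dots,\mathbf r_N)\in(\mathbb R^2)^N:\ \mathbf r_i\neq\mathbf r_j \text{ for } i\neq j\}$; $f(\mathbf r)=\sum_{i<j}\frac{\gamma m_im_j}{|\mathbf r_j-\mathbf r_i|}$, $g(\mathbf r)=\sum_i m_i|\mathbf r_i|^2$; $C(\mathbf m)=\min\{f(\mathbf r):\mathbf r\in\mathfrak R,\ g(\mathbf r)=1\}$, where $\mathbf m=(m_1,\dots,m_N)$. *)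

theory Defs
  imports "HOL-Analysis.Analysis"
begin

definition config_space :: "nat \<Rightarrow> (nat \<Rightarrow> real^2) set" where
  "config_space N = {r. \<forall>i<N. \<forall>j<N. i \<noteq> j \<longrightarrow> r i \<noteq> r j}"

definition potential_f :: "real \<Rightarrow> nat \<Rightarrow> (nat \<Rightarrow> real) \<Rightarrow> (nat \<Rightarrow> real^2) \<Rightarrow> real" where
  "potential_f \<gamma> N m r =
     (\<Sum>j<N. \<Sum>i<j. \<gamma> * m i * m j / norm (r j - r i))"

definition moment_g :: "nat \<Rightarrow> (nat \<Rightarrow> real) \<Rightarrow> (nat \<Rightarrow> real^2) \<Rightarrow> real" where
  "moment_g N m r = (\<Sum>i<N. m i * (norm (r i))^2)"

definition C_min :: "real \<Rightarrow> nat \<Rightarrow> (nat \<Rightarrow> real) \<Rightarrow> real" where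
  "C_min \<gamma> N m = Inf {potential_f \<gamma> N m r | r. r \<in> config_space N \<and> moment_g N m r = 1}"

definition C_L :: "real \<Rightarrow> nat \<Rightarrow> (nat \<Rightarrow> real) \<Rightarrow> real" where
  "C_L \<gamma> N m = \<gamma> * (\<Sum>j<N. \<Sum>i<j. m i * m j) powr (3/2) * (\<Sum>i<N. m i) powr (-1/2)"

end

theory Submission
  imports Defs
begin

lemma tri_ident:
  fixes m :: "nat \<Rightarrow> real" and r :: "nat \<Rightarrow> real^2"
  shows "(\<Sum>j<N. \<Sum>i<j. m i * m j * (norm (r j - r i))^2)
     = (\<Sum>i<N. m i) * (\<Sum>i<N. m i * (norm (r i))^2) - (norm (\<Sum>i<N. m i *\<^sub>R r i))^2"
proof (induction N)
  case 0
  then show ?case by simp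
next
  case (Suc N)
  define S where "S = (\<Sum>i<N. m i *\<^sub>R r i)"
  define M where "M = (\<Sum>i<N. m i)"
  define g where "g = (\<Sum>i<N. m i * (norm (r i))^2)"
  have e: "(\<Sum>i<N. m i * m N * (norm (r N - r i))^2)
      = m N * (M * (norm (r N))^2 - 2 * (r N \<bullet> S) + g)"
    unfolding S_def M_def g_def
    by (simp add: power2_norm_eq_inner inner_diff inner_sum_right sum_distrib_left
        sum_distrib_right sum_subtractf sum.distrib algebra_simps inner_commute)
  have n: "(norm (S + m N *\<^sub>R r N))^2 = (norm S)^2 + 2 * m N * (r N \<bullet> S) + (m N)^2 * (norm (r N))^2"
    unfolding power2_norm_eq_inner by (simp add: inner_add algebra_simps inner_commute power2_eq_square)
  have L: "(\<Sum>j<Suc N. \<Sum>i<j. m i * m j * (norm (r j - r i))^2)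
     = (\<Sum>j<N. \<Sum>i<j. m i * m j * (norm (r j - r i))^2) + (\<Sum>i<N. m i * m N * (norm (r N - r i))^2)"
    by simp
  have R: "(\<Sum>i<Suc N. m i) * (\<Sum>i<Suc N. m i * (norm (r i))^2) - (norm (\<Sum>i<Suc N. m i *\<^sub>R r i))^2
     = (M + m N) * (g + m N * (norm (r N))^2) - (norm (S + m N *\<^sub>R r N))^2"
    unfolding S_def M_def g_def by simp
  have IH: "(\<Sum>j<N. \<Sum>i<j. m i * m j * (norm (r j - r i))^2) = M * g - (norm S)^2"
    using Suc unfolding S_def M_def g_def .
  show ?case unfolding L R IH e n by (simp add: algebra_simps power2_eq_square)
qed

lemma term_ineq:
  fixes d t :: real
  assumes "d > 0" "t > 0"
  shows "1 / d \<ge> 3 / (2*t) - d^2 / (2 * t^3)"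
proof -
  have "(d - t)^2 * (d + 2*t) \<ge> 0" using assms by simp
  hence h: "2*t^3 + d^3 \<ge> 3 * t^2 * d" by (simp add: algebra_simps power2_eq_square power3_eq_cube)
  have "3 / (2*t) - d^2 / (2 * t^3) = (3 * t^2 * d - d^3) / (2 * t^3 * d)"
    using assms by (simp add: field_simps power2_eq_square power3_eq_cube)
  also have "\<dots> \<le> (2 * t^3) / (2 * t^3 * d)"
    using h assms by (intro divide_right_mono) auto
  also have "\<dots> = 1 / d" using assms by simp
  finally show ?thesis .
qed

lemma f_bound:
  fixes \<gamma> :: real and N :: nat and m :: "nat \<Rightarrow> real" and r :: "nat \<Rightarrow> real^2"
  assumes gp: "\<gamma> > 0" and N2: "N \<ge> 2" and mp: "\<And>i. i < N \<Longrightarrow> m i > 0"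
    and rc: "r \<in> config_space N" and g1: "moment_g N m r = 1"
  shows "potential_f \<gamma> N m r \<ge> C_L \<gamma> N m"
proof -
  define P where "P = (\<Sum>j<N. \<Sum>i<j. m i * m j)"
  define M where "M = (\<Sum>i<N. m i)"
  define D where "D = (\<Sum>j<N. \<Sum>i<j. m i * m j * (norm (r j - r i))^2)"
  define F where "F = (\<Sum>j<N. \<Sum>i<j. m i * m j / norm (r j - r i))"
  have nn: "\<And>j. j < N \<Longrightarrow> 0 \<le> (\<Sum>i<j. m i * m j)"
    using mp by (intro sum_nonneg) (simp add: less_imp_le)
  have "(\<Sum>i<1. m i * m 1) \<le> P" unfolding P_def
    using N2 nn by (intro member_le_sum) auto
  moreover have "(\<Sum>i<1. m i * m 1) > 0" using mp N2 by simp
  ultimately have Pp: "P > 0" by linarith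
  have "m 0 \<le> M" unfolding M_def using N2 mp by (intro member_le_sum) (auto simp: less_imp_le)
  with mp N2 have Mp: "M > 0" by (smt (verit) less_le_trans pos2)
  have "D = M * 1 - (norm (\<Sum>i<N. m i *\<^sub>R r i))^2"
    using tri_ident[where N=N and m=m and r=r] g1 unfolding D_def M_def moment_g_def by simp
  hence DM: "D \<le> M" by simp
  define t where "t = sqrt (M / P)"
  have tp: "t > 0" using Pp Mp t_def by simp
  have t2: "t^2 = M / P" using Pp Mp t_def by simp
  have dpos: "\<And>i j. i < j \<Longrightarrow> j < N \<Longrightarrow> norm (r j - r i) > 0"
    using rc unfolding config_space_def by fastforce
  have "(\<Sum>j<N. \<Sum>i<j. m i * m j * (3 / (2*t) - (norm (r j - r i))^2 / (2 * t^3))) \<le> F"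
    unfolding F_def
  proof (intro sum_mono)
    fix j i assume j: "j \<in> {..<N}" and i: "i \<in> {..<j}"
    have "m i * m j > 0" using mp i j by simp
    moreover have "3 / (2*t) - (norm (r j - r i))^2 / (2 * t^3) \<le> 1 / norm (r j - r i)"
      using term_ineq[OF dpos tp] i j by simp
    ultimately show "m i * m j * (3 / (2*t) - (norm (r j - r i))^2 / (2 * t^3)) \<le> m i * m j / norm (r j - r i)"
      by (metis mult_left_mono less_imp_le times_divide_eq_right mult.right_neutral)
  qed
  moreover have "(\<Sum>j<N. \<Sum>i<j. m i * m j * (3 / (2*t) - (norm (r j - r i))^2 / (2 * t^3)))
      = 3 / (2*t) * P - D / (2 * t^3)"
    unfolding P_def D_def
    by (simp add: right_diff_distrib sum_subtractf sum_distrib_left sum_divide_distrib algebra_simps)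
  ultimately have FB: "3 / (2*t) * P - M / (2 * t^3) \<le> F"
    using DM tp by (smt (verit) divide_right_mono zero_less_power mult_pos_pos)
  have "3 / (2*t) * P - M / (2 * t^3) = (3 * P * t^2 - M) / (2 * t^3)"
    using tp by (simp add: field_simps power2_eq_square power3_eq_cube)
  also have "\<dots> = M / t^3"
  proof -
    have e3: "3 * P * t^2 - M = 2 * M" using t2 Pp by (simp add: field_simps)
    show ?thesis unfolding e3 using tp by simp
  qed
  also have "\<dots> = P / t" using t2 tp Pp by (simp add: field_simps power2_eq_square power3_eq_cube)
  also have "\<dots> = P powr (3/2) * M powr (-1/2)"
  proof -
    have a: "P powr (3/2) = P * sqrt P"
    proof -
      have "P powr (3/2) = P powr (1 + 1/2)" by simp
      also have "\<dots> = P powr 1 * P powr (1/2)" by (rule powr_add)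
      finally show ?thesis using Pp by (simp add: powr_half_sqrt)
    qed
    have b: "M powr (-1/2) = 1 / sqrt M"
      using Mp by (simp add: powr_minus_divide powr_half_sqrt)
    show ?thesis unfolding a b t_def using Pp Mp
      by (simp add: real_sqrt_divide field_simps)
  qed
  finally have "P powr (3/2) * M powr (-1/2) \<le> F" using FB by simp
  hence "\<gamma> * (P powr (3/2) * M powr (-1/2)) \<le> \<gamma> * F" using gp by simp
  moreover have "potential_f \<gamma> N m r = \<gamma> * F"
    unfolding potential_f_def F_def by (simp add: sum_distrib_left mult.assoc)
  ultimately show ?thesis unfolding C_L_def P_def[symmetric] M_def[symmetric] by (simp add: mult.assoc)
qed


theorem mainTheorem6:
  fixes \<gamma> :: real and N :: nat and m :: "nat \<Rightarrow> real"
  assumes "\<gamma> > 0" and "N \<ge> 2" and "\<And>i. i < N \<Longrightarrow> m i > 0"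
  shows "C_min \<gamma> N m \<ge> C_L \<gamma> N m"
proof -
  define e :: "real^2" where "e = axis 1 1"
  have ne: "norm e = 1" unfolding e_def by simp
  define Q where "Q = (\<Sum>i<N. m i * (real i + 1)^2)"
  have "m 0 * (real 0 + 1)^2 \<le> Q" unfolding Q_def using assms
    by (intro member_le_sum) (auto simp: less_imp_le)
  hence Qp: "Q > 0" using assms(2) assms(3)[of 0] by simp
  define c where "c = 1 / sqrt Q"
  have cp: "c > 0" using Qp c_def by simp
  define r where "r = (\<lambda>i. (c * (real i + 1)) *\<^sub>R e)"
  have "r \<in> config_space N"
    unfolding config_space_def r_def using cp ne
    by (auto simp: scaleR_cancel_right)
  moreover have "moment_g N m r = 1"
  proof -
    have "moment_g N m r = (\<Sum>i<N. c^2 * (m i * (real i + 1)^2))"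
      unfolding moment_g_def r_def using cp ne
      by (intro sum.cong) (simp_all add: power_mult_distrib abs_of_nonneg)
    also have "\<dots> = c^2 * Q" unfolding Q_def by (simp add: sum_distrib_left)
    also have "\<dots> = 1" using Qp unfolding c_def by (simp add: power_divide)
    finally show ?thesis .
  qed
  ultimately have nemp: "{potential_f \<gamma> N m r | r. r \<in> config_space N \<and> moment_g N m r = 1} \<noteq> {}"
    by blast
  show ?thesis unfolding C_min_def
    by (rule cInf_greatest[OF nemp]) (auto intro: f_bound[OF assms])
qed

end
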